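(* Let $(r_t)_{t\ge0}$ be a continuous-time Markov chain on $\{1,2\}$ with $r_0=1$, rate $\lambda_{12}>0$ of jumping from regime 1 to regime 2 and rate $\lambda_{21}>0$ of jumping from regime 2 to regime 1. Let $0=\tau_0<\tau_1<\tau_2<\cdots$ be its successive regime-change times and $N_t$ the number of regime changes in $[0,t)$. For $k\ge1$ and $t\ge0$, the cumulative distribution functions $F_{\tau_l}(t)=P(\tau_l\le t)$ satisfy $$F_{\tau_{2k}}(t)=D(k,k,2k)\sum_{l=0}^{\infty}C(k,2k,l)\,\gamma(2k+l,\lambda_{21}t),$$ $$F_{\tau_{2k+1}}(t)=D(k+1,k+1,2k+1)\sum_{l=0}^{\infty}C(k+1,2k+1,l)\,\gamma(2k+l+1,\lambda_{21}t).$$ Moreover, for every $k\in\mathbb{N}$, $$p_k(t):=P(N_t=k)=F_{\tau_k}(t)-F_{\tau_{k+1}}(t).$$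
   Context: Notation: for integers $m,n$ and $l\ge1$, $D(m,n,l)=\dfrac{\lambda_{12}^m}{\lambda_{21}^n\,\Gamma(l)}$, and $D(m,n,0)=0$. The Pochhammer symbol is $a^{(0)}=1$, $a^{(l)}=a(a+1)\cdots(a+l-1)$. For $l>0$, $C(m,n,l)=\dfrac{m^{(l)}\left(1-\frac{\lambda_{12}}{\lambda_{21}}\right)^l}{n^{(l)}\,l!}$, and $C(m,n,0)=1$. $\gamma(a,z)=\int_0^z x^{a-1}e^{-x}\,dx$ is the lower incomplete Gamma function. *)

theory Defs
  imports "HOL-Probability.Probability"
begin

definition lower_gamma :: "real \<Rightarrow> real \<Rightarrow> real" where
  "lower_gamma a z = integral {0..z} (\<lambda>x. x powr (a - 1) * exp (- x))"

definition Dcoef :: "real \<Rightarrow> real \<Rightarrow> nat \<Rightarrow> nat \<Rightarrow> nat \<Rightarrow> real" where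
  "Dcoef lam12 lam21 m n l =
     (if l = 0 then 0 else lam12 ^ m / (lam21 ^ n * Gamma (real l)))"

definition Ccoef :: "real \<Rightarrow> real \<Rightarrow> nat \<Rightarrow> nat \<Rightarrow> nat \<Rightarrow> real" where
  "Ccoef lam12 lam21 m n l =
     (if l = 0 then 1
      else pochhammer (real m) l * (1 - lam12 / lam21) ^ l / (pochhammer (real n) l * fact l))"

(* Jump-hold description of the chain started in regime 1:
   S i = sojourn time in the i-th visited regime (regime 1 for even i, regime 2 for odd i).
   tau l = time of the l-th regime change, tau 0 = 0. *)
definition tau :: "(nat \<Rightarrow> 'a \<Rightarrow> real) \<Rightarrow> nat \<Rightarrow> 'a \<Rightarrow> real" where
  "tau S l \<omega> = (\<Sum>i<l. S i \<omega>)"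

definition regime :: "(nat \<Rightarrow> 'a \<Rightarrow> real) \<Rightarrow> real \<Rightarrow> 'a \<Rightarrow> nat" where
  "regime S t \<omega> = (if even (card {l. 1 \<le> l \<and> tau S l \<omega> \<le> t}) then 1 else 2)"

definition Ncount :: "(nat \<Rightarrow> 'a \<Rightarrow> real) \<Rightarrow> real \<Rightarrow> 'a \<Rightarrow> nat" where
  "Ncount S t \<omega> = card {l. 1 \<le> l \<and> tau S l \<omega> < t}"

definition Ftau :: "'a measure \<Rightarrow> (nat \<Rightarrow> 'a \<Rightarrow> real) \<Rightarrow> nat \<Rightarrow> real \<Rightarrow> real" where
  "Ftau M S l t = measure M {\<omega> \<in> space M. tau S l \<omega> \<le> t}"

end

theory Submission
  imports Defs
begin


lemma beta_nn:
  fixes z :: real assumes z: "0 \<le> z"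
  shows "(\<integral>\<^sup>+y. ennreal ((z - y)^i * y^j * indicator {0..z} y) \<partial>lborel)
       = ennreal (fact i * fact j / fact (i+j+1) * z^(i+j+1))"
proof -
  define C where "C = exp (-z) / (fact i * fact j)"
  have Cpos: "C > 0" unfolding C_def by simp
  have conv: "(\<integral>\<^sup>+y. ennreal (erlang_density i 1 (z - y)) * ennreal (erlang_density j 1 y) \<partial>lborel)
     = erlang_density (Suc i + Suc j - 1) 1 z"
    using fun_cong[OF convolution_erlang_density[of 1 i j], of z] by simp
  have "(\<integral>\<^sup>+y. ennreal (erlang_density i 1 (z - y)) * ennreal (erlang_density j 1 y) \<partial>lborel)
     = (\<integral>\<^sup>+y. ennreal C * ennreal ((z - y)^i * y^j * indicator {0..z} y) \<partial>lborel)"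
  proof (intro nn_integral_cong)
    fix y :: real
    show "ennreal (erlang_density i 1 (z - y)) * ennreal (erlang_density j 1 y)
       = ennreal C * ennreal ((z - y)^i * y^j * indicator {0..z} y)"
    proof (cases "0 \<le> y \<and> y \<le> z")
      case True
      have "exp (- (z - y)) * exp (- y) = exp (-z)" by (simp add: exp_add[symmetric])
      then have "erlang_density i 1 (z - y) * erlang_density j 1 y = C * ((z - y)^i * y^j * indicator {0..z} y)"
        using True unfolding erlang_density_def C_def by (auto simp: field_simps)
      moreover have "erlang_density i 1 (z - y) \<ge> 0" "erlang_density j 1 y \<ge> 0" by auto
      ultimately show ?thesis using Cpos True by (simp add: ennreal_mult[symmetric])
    next
      case False
      then show ?thesis by (auto simp: erlang_density_def)
    qed
  qed
  also have "\<dots> = ennreal C * (\<integral>\<^sup>+y. ennreal ((z - y)^i * y^j * indicator {0..z} y) \<partial>lborel)"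
    by (rule nn_integral_cmult) auto
  finally have eq: "ennreal C * (\<integral>\<^sup>+y. ennreal ((z - y)^i * y^j * indicator {0..z} y) \<partial>lborel)
       = ennreal (z^(i+j+1) * exp (-z) / fact (i+j+1))"
    using conv z by (simp add: erlang_density_def)
  have "(\<integral>\<^sup>+y. ennreal ((z - y)^i * y^j * indicator {0..z} y) \<partial>lborel)
     = ennreal (1/C) * (ennreal C * (\<integral>\<^sup>+y. ennreal ((z - y)^i * y^j * indicator {0..z} y) \<partial>lborel))"
    using Cpos by (simp add: mult.assoc[symmetric] ennreal_mult[symmetric])
  also have "\<dots> = ennreal (1/C * (z^(i+j+1) * exp (-z) / fact (i+j+1)))"
    unfolding eq using Cpos z by (simp add: ennreal_mult[symmetric])
  also have "1/C * (z^(i+j+1) * exp (-z) / fact (i+j+1)) = fact i * fact j / fact (i+j+1) * z^(i+j+1)"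
    unfolding C_def by (simp add: field_simps)
  finally show ?thesis .
qed

lemma beta_int:
  fixes z :: real assumes z: "0 \<le> z"
  shows "integrable lborel (\<lambda>y. (z - y)^i * y^j * indicator {0..z} y)"
    and "(\<integral>y. (z - y)^i * y^j * indicator {0..z} y \<partial>lborel) = fact i * fact j / fact (i+j+1) * z^(i+j+1)"
proof -
  have "(\<integral>\<^sup>+y. ennreal ((z - y)^i * y^j * indicator {0..z} y) \<partial>lborel)
       = ennreal (fact i * fact j / fact (i+j+1) * z^(i+j+1))" by (rule beta_nn[OF z])
  moreover have "AE y in lborel. 0 \<le> (z - y)^i * y^j * indicator {0..z} y"
    by (auto simp: indicator_def)
  moreover have "0 \<le> fact i * fact j / fact (i+j+1) * z^(i+j+1)" using z by simp
  ultimately have "integrable lborel (\<lambda>y. (z - y)^i * y^j * indicator {0..z} y) \<and>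
    (\<integral>y. (z - y)^i * y^j * indicator {0..z} y \<partial>lborel) = fact i * fact j / fact (i+j+1) * z^(i+j+1)"
    by (subst (asm) nn_integral_eq_integrable) auto
  then show "integrable lborel (\<lambda>y. (z - y)^i * y^j * indicator {0..z} y)"
    and "(\<integral>y. (z - y)^i * y^j * indicator {0..z} y \<partial>lborel) = fact i * fact j / fact (i+j+1) * z^(i+j+1)"
    by auto
qed



definition Kc :: "real \<Rightarrow> real \<Rightarrow> nat \<Rightarrow> nat \<Rightarrow> nat \<Rightarrow> real" where
  "Kc a b p q l = a^(p+1) * b^(q+1) * (b-a)^l * fact (p+l) / (fact l * fact p * fact (p+q+1+l))"

definition gden :: "real \<Rightarrow> real \<Rightarrow> nat \<Rightarrow> nat \<Rightarrow> real \<Rightarrow> real" where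
  "gden a b p q z = (\<Sum>l. Kc a b p q l * z^(p+q+1+l) * exp(-b*z))"

lemma summable_exp_abs: fixes x :: real shows "summable (\<lambda>l. (abs x)^l / fact l)"
  using summable_exp[of "(abs x)"] by (simp add: divide_inverse mult.commute)

lemma Kc_bound: "(abs (Kc a b p q l)) * r^l \<le> (abs (a^(p+1) * b^(q+1))) * (((abs (b-a))*r)^l / fact l)"
  if "r \<ge> 0" for r :: real
proof -
  have f1: "fact (p+l) \<le> (fact (p+q+1+l) :: real)" by (intro fact_mono) auto
  have f2: "(1::real) \<le> fact p" by simp
  have "fact (p+l) / (fact l * fact p * fact (p+q+1+l)) \<le> (1::real) / fact l"
  proof -
    have "fact (p+l) / (fact l * fact p * fact (p+q+1+l)) = (fact (p+l) / fact (p+q+1+l)) / fact p / (fact l :: real)"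
      by (simp add: field_simps)
    also have "\<dots> \<le> 1 / fact p / fact l"
      using f1 by (intro divide_right_mono) (auto simp: divide_le_eq_1)
    also have "\<dots> \<le> 1 / fact l" using f2
      by (intro divide_right_mono) (auto simp: divide_le_eq_1)
    finally show ?thesis .
  qed
  then have "(abs (Kc a b p q l)) = (abs (a^(p+1) * b^(q+1))) * (abs (b-a))^l * (fact (p+l) / (fact l * fact p * fact (p+q+1+l)))"
    unfolding Kc_def by (simp add: abs_mult power_abs)
  also have "\<dots> \<le> (abs (a^(p+1) * b^(q+1))) * (abs (b-a))^l * (1 / fact l)"
    by (intro mult_left_mono \<open>_ \<le> 1 / fact l\<close>) auto
  also have "\<dots> = (abs (a^(p+1) * b^(q+1))) * ((abs (b-a))^l / fact l)" by simp
  finally have "(abs (Kc a b p q l)) * r^l \<le> (abs (a^(p+1) * b^(q+1))) * ((abs (b-a))^l / fact l) * r^l"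
    using that by (intro mult_right_mono) auto
  also have "\<dots> = (abs (a^(p+1) * b^(q+1))) * (((abs (b-a))*r)^l / fact l)"
    by (simp add: power_mult_distrib)
  finally show ?thesis .
qed

lemma summable_Kc: "r \<ge> 0 \<Longrightarrow> summable (\<lambda>l. (abs (Kc a b p q l)) * r^l)"
  apply (rule summable_comparison_test[OF _ summable_mult[OF summable_exp_abs[of "(abs (b-a))*r"]]])
  apply (rule exI[of _ 0])
  using Kc_bound[of r a b p q] by (auto simp: abs_mult)



lemma exp_sums_real: "(\<lambda>l. x^l / fact l) sums exp (x::real)"
  using exp_converges[of x] by (simp add: divide_inverse mult.commute scaleR_conv_of_real)

lemma conv_density:
  fixes a b z :: real
  assumes a: "a > 0" and b: "b > 0" and z: "z \<ge> 0"
  shows "(\<integral>\<^sup>+y. ennreal (erlang_density p a (z - y)) * ennreal (erlang_density q b y) \<partial>lborel)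
        = ennreal (gden a b p q z)"
    and "gden a b p q z \<ge> 0"
proof -
  define A where "A = a^(p+1)*b^(q+1)/(fact p*fact q) * exp(-b*z)"
  define w where "w l y = (z-y)^(p+l) * y^q * indicator {0..z} y" for l y
  define u where "u l y = A * ((b-a)^l/fact l) * w l y" for l y
  define F where "F y = erlang_density p a (z - y) * erlang_density q b y" for y
  have wint: "integrable lborel (w l)" "integral\<^sup>L lborel (w l) = fact (p+l) * fact q / fact (p+l+q+1) * z^(p+l+q+1)" for l
    unfolding w_def using beta_int[OF z, of "p+l" q] by auto
  have wnn: "w l y \<ge> 0" for l y unfolding w_def by (auto simp: indicator_def)
  have Anonneg: "A \<ge> 0" unfolding A_def using a b by auto
  have uint: "integrable lborel (u l)" for l
    unfolding u_def using wint(1)[of l] by (intro integrable_mult_right) auto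
  have uval: "integral\<^sup>L lborel (u l) = Kc a b p q l * z^(p+q+1+l) * exp(-b*z)" for l
  proof -
    have "integral\<^sup>L lborel (u l) = A * ((b-a)^l/fact l) * integral\<^sup>L lborel (w l)"
      unfolding u_def by simp
    also have "\<dots> = Kc a b p q l * z^(p+q+1+l) * exp(-b*z)"
      unfolding wint(2) A_def Kc_def by (simp add: field_simps ac_simps)
    finally show ?thesis .
  qed
  have unorm: "(\<integral>y. norm (u l y) \<partial>lborel) = abs (Kc a b p q l) * z^(p+q+1+l) * exp(-b*z)" for l
  proof -
    have "(\<lambda>y. norm (u l y)) = (\<lambda>y. (A * (abs (b-a)^l/fact l)) * w l y)"
      using Anonneg wnn unfolding u_def by (auto simp: abs_mult power_abs)
    then have "(\<integral>y. norm (u l y) \<partial>lborel) = A * (abs (b-a)^l/fact l) * integral\<^sup>L lborel (w l)"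
      by simp
    also have "\<dots> = abs (Kc a b p q l) * z^(p+q+1+l) * exp(-b*z)"
      unfolding wint(2) A_def Kc_def using a b by (simp add: field_simps ac_simps abs_mult power_abs)
    finally show ?thesis .
  qed
  have sumnorm: "summable (\<lambda>l. (\<integral>y. norm (u l y) \<partial>lborel))"
    unfolding unorm
    using summable_mult2[OF summable_Kc[OF z, of a b p q], of "z^(p+q+1) * exp(-b*z)"]
    by (simp add: power_add ac_simps)
  have usums: "(\<lambda>l. u l y) sums F y" for y
  proof (cases "0 \<le> y \<and> y \<le> z")
    case True
    define C where "C = A * (z-y)^p * y^q"
    have "(\<lambda>l. C * (((b-a)*(z-y))^l / fact l)) sums (C * exp ((b-a)*(z-y)))"
      by (intro sums_mult exp_sums_real)
    moreover have "(\<lambda>l. C * (((b-a)*(z-y))^l / fact l)) = (\<lambda>l. u l y)"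
      using True unfolding u_def w_def C_def by (auto simp: power_mult_distrib power_add mult_ac)
    moreover have "C * exp ((b-a)*(z-y)) = F y"
    proof -
      have "exp (-b*z) * exp ((b-a)*(z-y)) = exp (- a * (z - y)) * exp (- b * y)"
        by (simp add: exp_add[symmetric] algebra_simps)
      then show ?thesis
        using True unfolding C_def A_def F_def erlang_density_def
        by (auto simp: field_simps)
    qed
    ultimately show ?thesis by simp
  next
    case False
    then have "u l y = 0" for l unfolding u_def w_def by auto
    moreover have "F y = 0" using False unfolding F_def erlang_density_def by auto
    ultimately show ?thesis by simp
  qed
  have usumn: "summable (\<lambda>l. norm (u l y))" for y
  proof (cases "0 \<le> y \<and> y \<le> z")
    case True
    have "summable (\<lambda>l. (abs A * abs (z-y)^p * abs y^q) * (abs ((b-a)*(z-y))^l / fact l))"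
      by (intro summable_mult summable_exp_abs)
    moreover have "(\<lambda>l. (abs A * abs (z-y)^p * abs y^q) * (abs ((b-a)*(z-y))^l / fact l)) = (\<lambda>l. norm (u l y))"
      using True unfolding u_def w_def by (auto simp: power_mult_distrib power_add mult_ac abs_mult power_abs)
    ultimately show ?thesis by simp
  next
    case False
    then have "u l y = 0" for l unfolding u_def w_def by auto
    then show ?thesis by simp
  qed
  have Feq: "F = (\<lambda>y. \<Sum>l. u l y)"
    using usums by (auto simp: sums_iff)
  have Fint: "integrable lborel F"
    unfolding Feq using uint usumn sumnorm by (intro integrable_suminf) auto
  have Fsums: "(\<lambda>l. integral\<^sup>L lborel (u l)) sums integral\<^sup>L lborel F"
    unfolding Feq using uint usumn sumnorm by (intro sums_integral) auto
  have gsums: "(\<lambda>l. Kc a b p q l * z^(p+q+1+l) * exp(-b*z)) sums integral\<^sup>L lborel F"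
    using Fsums unfolding uval .
  then have geq: "gden a b p q z = integral\<^sup>L lborel F"
    unfolding gden_def by (simp add: sums_iff)
  have Fnn: "F y \<ge> 0" for y unfolding F_def using a b by auto
  show "gden a b p q z \<ge> 0" unfolding geq using Fnn by (intro integral_nonneg_AE) auto
  have "(\<integral>\<^sup>+y. ennreal (erlang_density p a (z - y)) * ennreal (erlang_density q b y) \<partial>lborel)
      = (\<integral>\<^sup>+y. ennreal (F y) \<partial>lborel)"
    unfolding F_def using a b by (intro nn_integral_cong) (simp add: ennreal_mult)
  also have "\<dots> = ennreal (integral\<^sup>L lborel F)"
    using Fint Fnn by (intro nn_integral_eq_integral) auto
  finally show "(\<integral>\<^sup>+y. ennreal (erlang_density p a (z - y)) * ennreal (erlang_density q b y) \<partial>lborel)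
        = ennreal (gden a b p q z)" unfolding geq .
qed



definition Jint :: "real \<Rightarrow> nat \<Rightarrow> real \<Rightarrow> real" where
  "Jint b N t = (\<integral>z. z^N * exp(-b*z) * indicator {0..t} z \<partial>lborel)"

lemma Jint_integrable: "integrable lborel (\<lambda>z::real. z^N * exp(-b*z) * indicator {0..t} z)"
proof -
  have "set_integrable lborel {0..t} (\<lambda>z::real. z^N * exp(-b*z))"
    by (intro borel_integrable_atLeastAtMost' continuous_intros)
  then show ?thesis unfolding set_integrable_def by (simp add: mult.commute)
qed

lemma Jint_bound:
  assumes b: "b > 0" and t: "t \<ge> 0"
  shows "Jint b N t \<le> t^N * t" "Jint b N t \<ge> 0"
proof -
  have "Jint b N t \<le> (\<integral>z. t^N * indicator {0..t} z \<partial>lborel)"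
    unfolding Jint_def
  proof (intro integral_mono Jint_integrable)
    show "integrable lborel (\<lambda>z::real. t^N * indicator {0..t} z)"
      by (intro integrable_mult_right) (auto simp: t)
    fix z :: real
    show "z^N * exp(-b*z) * indicator {0..t} z \<le> t^N * indicator {0..t} z"
    proof (cases "0 \<le> z \<and> z \<le> t")
      case True
      have "z^N \<le> t^N" using True by (intro power_mono) auto
      moreover have "exp(-b*z) \<le> 1" using True b by auto
      ultimately have "z^N * exp(-b*z) \<le> t^N * 1"
        using True by (intro mult_mono) auto
      then show ?thesis using True by simp
    qed auto
  qed
  also have "\<dots> = t^N * t" using t by simp
  finally show "Jint b N t \<le> t^N * t" .
  show "Jint b N t \<ge> 0" unfolding Jint_def by (intro integral_nonneg_AE) (auto simp: indicator_def)
qed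

lemma cdf_sum:
  assumes P: "prob_space M" and a: "a > 0" and b: "b > 0"
    and ind: "prob_space.indep_var M borel X borel Y"
    and DX: "distributed M lborel X (erlang_density p a)"
    and DY: "distributed M lborel Y (erlang_density q b)"
    and t: "t \<ge> 0"
  shows "(\<lambda>l. Kc a b p q l * Jint b (p+q+1+l) t) sums measure M {\<omega>\<in>space M. X \<omega> + Y \<omega> \<le> t}"
proof -
  interpret prob_space M by (rule P)
  define h where "h z = (\<integral>\<^sup>+y. ennreal (erlang_density p a (z - y)) * ennreal (erlang_density q b y) \<partial>lborel)" for z
  have D: "distributed M lborel (\<lambda>\<omega>. X \<omega> + Y \<omega>) h"
    unfolding h_def by (rule distributed_convolution[OF ind DX DY])
  have "emeasure M {\<omega>\<in>space M. X \<omega> + Y \<omega> \<le> t} = emeasure M ((\<lambda>\<omega>. X \<omega> + Y \<omega>) -` {..t} \<inter> space M)"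
    by (intro arg_cong[where f="emeasure M"]) auto
  also have "\<dots> = (\<integral>\<^sup>+z. h z * indicator {..t} z \<partial>lborel)"
    by (rule distributed_emeasure[OF D]) auto
  finally have em: "emeasure M {\<omega>\<in>space M. X \<omega> + Y \<omega> \<le> t} = (\<integral>\<^sup>+z. h z * indicator {..t} z \<partial>lborel)" .
  define G where "G z = gden a b p q z * indicator {0..t} z" for z
  have hG: "h z * indicator {..t} z = ennreal (G z)" for z
  proof (cases "z < 0")
    case True
    have "h z = 0" unfolding h_def
      using True by (intro nn_integral_zero') (auto simp: erlang_density_def)
    then show ?thesis using True unfolding G_def by simp
  next
    case False
    then show ?thesis unfolding G_def h_def using conv_density[OF a b, of z p q]
      by (auto simp: indicator_def)
  qed
  define v where "v l z = Kc a b p q l * (z^(p+q+1+l) * exp(-b*z) * indicator {0..t} z)" for l z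
  have vint: "integrable lborel (v l)" for l unfolding v_def
    by (intro integrable_mult_right Jint_integrable)
  have vval: "integral\<^sup>L lborel (v l) = Kc a b p q l * Jint b (p+q+1+l) t" for l
    unfolding v_def Jint_def by simp
  have vnorm: "(\<integral>z. norm (v l z) \<partial>lborel) = abs (Kc a b p q l) * Jint b (p+q+1+l) t" for l
  proof -
    have "(\<lambda>z. norm (v l z)) = (\<lambda>z. abs (Kc a b p q l) * (z^(p+q+1+l) * exp(-b*z) * indicator {0..t} z))"
      unfolding v_def by (auto simp: abs_mult indicator_def)
    then show ?thesis unfolding Jint_def by simp
  qed
  have sumnorm: "summable (\<lambda>l. (\<integral>z. norm (v l z) \<partial>lborel))"
    unfolding vnorm
  proof (rule summable_comparison_test[OF _ summable_mult2[OF summable_Kc[OF t, of a b p q], of "t^(p+q+2)"]])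
    show "\<exists>N. \<forall>n\<ge>N. norm (abs (Kc a b p q n) * Jint b (p + q + 1 + n) t) \<le> abs (Kc a b p q n) * t ^ n * t ^ (p + q + 2)"
    proof (intro exI allI impI)
      fix n :: nat
      have "Jint b (p + q + 1 + n) t \<le> t ^ n * t ^ (p + q + 2)"
        using Jint_bound(1)[OF b t, of "p+q+1+n"] by (simp add: power_add ac_simps)
      then show "norm (abs (Kc a b p q n) * Jint b (p + q + 1 + n) t) \<le> abs (Kc a b p q n) * t ^ n * t ^ (p + q + 2)"
        using Jint_bound(2)[OF b t, of "p+q+1+n"]
        by (simp add: abs_mult mult.assoc mult_left_mono)
    qed
  qed
  have vsumn: "summable (\<lambda>l. norm (v l z))" for z
  proof (cases "0 \<le> z \<and> z \<le> t")
    case True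
    have "summable (\<lambda>l. abs (Kc a b p q l) * z^l * (z^(p+q+1) * exp(-b*z)))"
      using True by (intro summable_mult2 summable_Kc) auto
    moreover have "(\<lambda>l. abs (Kc a b p q l) * z^l * (z^(p+q+1) * exp(-b*z))) = (\<lambda>l. norm (v l z))"
      using True unfolding v_def by (auto simp: abs_mult power_add mult_ac)
    ultimately show ?thesis by simp
  next
    case False
    then show ?thesis unfolding v_def by simp
  qed
  have vsums: "(\<lambda>l. v l z) sums G z" for z
  proof -
    have "summable (\<lambda>l. Kc a b p q l * z^(p+q+1+l) * exp(-b*z))"
    proof (cases "0 \<le> z \<and> z \<le> t")
      case True
      then show ?thesis using summable_norm_cancel[OF vsumn[of z]] unfolding v_def by (simp add: mult.assoc)
    next
      case False
      have "summable (\<lambda>l. abs (Kc a b p q l) * abs z^l * (abs z^(p+q+1) * exp(-b*z)))"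
        by (intro summable_mult2 summable_Kc) auto
      then have "summable (\<lambda>l. norm (Kc a b p q l * z^(p+q+1+l) * exp(-b*z)))"
        by (simp add: abs_mult power_add power_abs mult_ac)
      then show ?thesis by (rule summable_norm_cancel)
    qed
    then have "(\<lambda>l. Kc a b p q l * z^(p+q+1+l) * exp(-b*z)) sums gden a b p q z"
      unfolding gden_def by (rule summable_sums)
    then have "(\<lambda>l. (Kc a b p q l * z^(p+q+1+l) * exp(-b*z)) * indicator {0..t} z) sums (gden a b p q z * indicator {0..t} z)"
      by (rule sums_mult2)
    then show ?thesis unfolding v_def G_def by (simp add: mult_ac)
  qed
  have Geq: "G = (\<lambda>z. \<Sum>l. v l z)" using vsums by (auto simp: sums_iff)
  have Gint: "integrable lborel G"
    unfolding Geq using vint vsumn sumnorm by (intro integrable_suminf) auto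
  have Gsums: "(\<lambda>l. integral\<^sup>L lborel (v l)) sums integral\<^sup>L lborel G"
    unfolding Geq using vint vsumn sumnorm by (intro sums_integral) auto
  have Gnn: "G z \<ge> 0" for z unfolding G_def using conv_density(2)[OF a b, of z p q]
    by (auto simp: indicator_def)
  have "emeasure M {\<omega>\<in>space M. X \<omega> + Y \<omega> \<le> t} = ennreal (integral\<^sup>L lborel G)"
    unfolding em hG using Gint Gnn by (intro nn_integral_eq_integral) auto
  then have "measure M {\<omega>\<in>space M. X \<omega> + Y \<omega> \<le> t} = integral\<^sup>L lborel G"
    using Gnn by (simp add: emeasure_eq_measure integral_nonneg)
  then show ?thesis using Gsums unfolding vval by simp
qed



definition Pn :: "nat \<Rightarrow> real \<Rightarrow> real" where
  "Pn N x = (\<Sum>j\<le>N. x^j * exp(-x) / fact j)"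

lemma Pn_deriv: "DERIV (Pn N) x :> - (x^N * exp(-x) / fact N)"
proof (induction N)
  case 0
  show ?case unfolding Pn_def by (auto intro!: derivative_eq_intros)
next
  case (Suc N)
  have e1: "DERIV (\<lambda>x. x^Suc N) x :> real (Suc N) * x^N"
    using DERIV_pow[of "Suc N" x] by simp
  have e2: "DERIV (\<lambda>x. exp(-x)) x :> exp(-x) * (-1)"
    by (auto intro!: derivative_eq_intros)
  have d1: "DERIV (\<lambda>x. x^Suc N * exp(-x)) x :> real (Suc N) * x^N * exp(-x) - x^Suc N * exp(-x)"
    using DERIV_mult[OF e1 e2] by (simp add: algebra_simps)
  have d2: "DERIV (\<lambda>x. x^Suc N * exp(-x) / fact (Suc N)) x :> (real (Suc N) * x^N * exp(-x) - x^Suc N * exp(-x)) / fact (Suc N)"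
    by (intro DERIV_cdivide d1)
  have "DERIV (\<lambda>x. Pn N x + x^Suc N * exp(-x) / fact (Suc N)) x :>
      - (x^N * exp(-x) / fact N) + (real (Suc N) * x^N * exp(-x) - x^Suc N * exp(-x)) / fact (Suc N)"
    by (intro DERIV_add Suc d2)
  also have "(\<lambda>x. Pn N x + x^Suc N * exp(-x) / fact (Suc N)) = Pn (Suc N)"
    unfolding Pn_def by (simp add: fun_eq_iff)
  also have "- (x^N * exp(-x) / fact N) + (real (Suc N) * x^N * exp(-x) - x^Suc N * exp(-x)) / fact (Suc N)
      = - (x^Suc N * exp(-x) / fact (Suc N))"
  proof -
    have "real (Suc N) * x^N * exp(-x) / fact (Suc N) = x^N * exp(-x) / fact N"
      by (simp add: field_simps del: of_nat_Suc)
    then show ?thesis by (simp add: diff_divide_distrib)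
  qed
  finally show ?case .
qed

lemma Pn_0: "Pn N 0 = 1"
  by (induction N) (auto simp: Pn_def)

lemma lower_gamma_eq:
  assumes N: "1 \<le> N" and s: "0 \<le> s"
  shows "lower_gamma (real (Suc N)) s = fact N * (1 - Pn N s)"
proof -
  have "lower_gamma (real (Suc N)) s = integral {0..s} (\<lambda>x. x^N * exp(-x))"
    unfolding lower_gamma_def
  proof (intro integral_cong)
    fix x assume "x \<in> {0..s}"
    then show "x powr (real (Suc N) - 1) * exp (- x) = x^N * exp(-x)"
      using N by (cases "x = 0") (auto simp: powr_realpow)
  qed
  also have "\<dots> = (- fact N * Pn N s) - (- fact N * Pn N 0)"
  proof (intro integral_unique fundamental_theorem_of_calculus s ballI)
    fix x assume "x \<in> {0..s}"
    have "DERIV (\<lambda>x. - fact N * Pn N x) x :> - fact N * (- (x^N * exp(-x) / fact N))"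
      by (intro DERIV_cmult Pn_deriv)
    then have "DERIV (\<lambda>x. - fact N * Pn N x) x :> x^N * exp(-x)" by simp
    then show "((\<lambda>x. - fact N * Pn N x) has_vector_derivative x^N * exp(-x)) (at x within {0..s})"
      by (simp add: has_real_derivative_iff_has_vector_derivative[symmetric] has_field_derivative_at_within)
  qed
  also have "\<dots> = fact N * (1 - Pn N s)" by (simp add: Pn_0 algebra_simps)
  finally show ?thesis .
qed

lemma Jint_eq:
  assumes b: "b > 0" and t: "0 \<le> t"
  shows "Jint b N t = fact N * (1 - Pn N (b*t)) / b^(N+1)"
proof -
  define F where "F z = - fact N / b^(N+1) * Pn N (b*z)" for z
  have "(\<integral>z. indicator {0..t} z *\<^sub>R (z^N * exp(-b*z)) \<partial>lborel) = F t - F 0"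
  proof (rule integral_FTC_atLeastAtMost[OF t])
    fix x assume "0 \<le> x" "x \<le> t"
    have "DERIV (\<lambda>z. Pn N (b*z)) x :> - ((b*x)^N * exp(-(b*x)) / fact N) * b"
      by (rule DERIV_chain2[OF Pn_deriv]) (auto intro!: derivative_eq_intros)
    then have "DERIV F x :> - fact N / b^(N+1) * (- ((b*x)^N * exp(-(b*x)) / fact N) * b)"
      unfolding F_def by (intro DERIV_cmult)
    moreover have "- fact N / b^(N+1) * (- ((b*x)^N * exp(-(b*x)) / fact N) * b) = x^N * exp(-b*x)"
      using b by (simp add: power_mult_distrib field_simps)
    ultimately have "DERIV F x :> x^N * exp(-b*x)" by simp
    then show "(F has_vector_derivative x^N * exp(-b*x)) (at x within {0..t})"
      by (simp add: has_real_derivative_iff_has_vector_derivative[symmetric] has_field_derivative_at_within)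
  next
    show "continuous_on {0..t} (\<lambda>z. z^N * exp(-b*z))" by (intro continuous_intros)
  qed
  moreover have "(\<integral>z. indicator {0..t} z *\<^sub>R (z^N * exp(-b*z)) \<partial>lborel) = Jint b N t"
    unfolding Jint_def by (simp add: mult_ac)
  ultimately show ?thesis unfolding F_def using b by (simp add: Pn_0 field_simps)
qed

lemma poch_fact: "pochhammer (real (Suc m)) l = fact (m+l) / fact m"
proof -
  have "(fact (m+l) :: real) = pochhammer 1 (m+l)" by (simp add: pochhammer_fact)
  also have "\<dots> = pochhammer 1 m * pochhammer (1 + of_nat m) l" by (rule pochhammer_product')
  also have "\<dots> = fact m * pochhammer (real (Suc m)) l" by (simp add: pochhammer_fact add.commute)
  finally show ?thesis by (simp add: field_simps)
qed

lemma Ccoef_eq: "Ccoef a b (Suc p) (Suc (Suc (p+q))) l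
   = fact (p+l) / fact p * (1 - a/b)^l / (fact (p+q+1+l) / fact (p+q+1) * fact l)"
  unfolding Ccoef_def using poch_fact[of p l] poch_fact[of "Suc (p+q)" l]
  by (simp add: ac_simps)

lemma coef_eq:
  assumes a: "a > 0" and b: "b > 0" and t: "0 \<le> t"
  shows "Kc a b p q l * Jint b (p+q+1+l) t =
    Dcoef a b (Suc p) (Suc p) (Suc (Suc (p+q))) * Ccoef a b (Suc p) (Suc (Suc (p+q))) l
      * lower_gamma (real (Suc (Suc (p+q)) + l)) (b * t)"
proof -
  define N where "N = p+q+1+l"
  define E where "E = fact N * (1 - Pn N (b*t))"
  have lg: "lower_gamma (real (Suc (Suc (p+q)) + l)) (b * t) = E"
    unfolding E_def using lower_gamma_eq[of N "b*t"] b t unfolding N_def by simp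
  have J: "Jint b (p+q+1+l) t = E / b^(N+1)"
    unfolding E_def N_def using Jint_eq[OF b t] by simp
  have G: "Gamma (real (Suc (Suc (p+q)))) = fact (p+q+1)"
    using Gamma_fact[of "p+q+1", where 'a=real] by (simp add: add_ac)
  have D: "Dcoef a b (Suc p) (Suc p) (Suc (Suc (p+q))) = a^(p+1) / (b^(p+1) * fact (p+q+1))"
    unfolding Dcoef_def G by simp
  have "1 - a/b = (b-a)/b" using b by (simp add: field_simps)
  then have pw: "(1 - a/b)^l = (b-a)^l / b^l" by (simp add: power_divide)
  have bN: "b^(N+1) = b^(p+1) * b^(q+1) * b^l" unfolding N_def by (simp add: power_add[symmetric] ac_simps)
  define F1 where "F1 = (fact (p+l) :: real)"
  define F2 where "F2 = (fact p :: real)"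
  define F3 where "F3 = (fact (p+q+1+l) :: real)"
  define F4 where "F4 = (fact (p+q+1) :: real)"
  define F5 where "F5 = (fact l :: real)"
  have pos: "F1 > 0" "F2 > 0" "F3 > 0" "F4 > 0" "F5 > 0" unfolding F1_def F2_def F3_def F4_def F5_def by auto
  have K: "Kc a b p q l = a^(p+1) * b^(q+1) * (b-a)^l * F1 / (F5 * F2 * F3)"
    unfolding Kc_def F1_def F2_def F3_def F5_def by simp
  have C: "Ccoef a b (Suc p) (Suc (Suc (p+q))) l = F1 / F2 * ((b-a)^l / b^l) / (F3 / F4 * F5)"
    unfolding Ccoef_eq pw F1_def F2_def F3_def F4_def F5_def by simp
  have D': "Dcoef a b (Suc p) (Suc p) (Suc (Suc (p+q))) = a^(p+1) / (b^(p+1) * F4)"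
    unfolding D F4_def ..
  show ?thesis
    unfolding lg J D' C K bN using a b pos
    by (simp add: field_simps)
qed



lemma (in prob_space) indep_var_sums:
  fixes X :: "'i \<Rightarrow> 'a \<Rightarrow> real"
  assumes indep: "indep_vars (\<lambda>_. borel) X I" and AB: "A \<inter> B = {}" "A \<subseteq> I" "B \<subseteq> I"
    and fin: "finite A" "finite B"
  shows "indep_var borel (\<lambda>\<omega>. \<Sum>i\<in>A. X i \<omega>) borel (\<lambda>\<omega>. \<Sum>i\<in>B. X i \<omega>)"
proof -
  have "indep_var
    borel ((\<lambda>f. \<Sum>i\<in>A. f i) \<circ> (\<lambda>\<omega>. restrict (\<lambda>i. X i \<omega>) A))
    borel ((\<lambda>f. \<Sum>i\<in>B. f i) \<circ> (\<lambda>\<omega>. restrict (\<lambda>i. X i \<omega>) B))"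
    using AB fin by (intro indep_var_compose[OF indep_var_restrict[OF indep]]) auto
  also have "((\<lambda>f. \<Sum>i\<in>A. f i) \<circ> (\<lambda>\<omega>. restrict (\<lambda>i. X i \<omega>) A)) = (\<lambda>\<omega>. \<Sum>i\<in>A. X i \<omega>)"
    by (auto cong: rev_conj_cong)
  also have "((\<lambda>f. \<Sum>i\<in>B. f i) \<circ> (\<lambda>\<omega>. restrict (\<lambda>i. X i \<omega>) B)) = (\<lambda>\<omega>. \<Sum>i\<in>B. X i \<omega>)"
    by (auto cong: rev_conj_cong)
  finally show ?thesis .
qed

lemma lessThan_split_parity:
  fixes n :: nat shows "{..<n} = (\<lambda>j. 2*j) ` {..<(n+1) div 2} \<union> (\<lambda>j. 2*j+1) ` {..<n div 2}" (is "_ = ?A \<union> ?B")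
proof (intro equalityI subsetI)
  fix x assume "x \<in> {..<n}"
  then have x: "x < n" by simp
  show "x \<in> ?A \<union> ?B"
  proof (cases "even x")
    case True
    then have "x = 2 * (x div 2)" "x div 2 < (n+1) div 2" using x by auto
    then show ?thesis by blast
  next
    case False
    then have "x = 2 * (x div 2) + 1" "x div 2 < n div 2" using x by presburger+
    then show ?thesis by blast
  qed
next
  fix x assume "x \<in> ?A \<union> ?B"
  then show "x \<in> {..<n}" by auto
qed

lemma parity_disjoint: "(\<lambda>j::nat. 2*j) ` A \<inter> (\<lambda>j. 2*j+1) ` B = {}"
  by auto presburger

lemma tau_cdf:
  fixes M :: "'a measure" and S :: "nat \<Rightarrow> 'a \<Rightarrow> real" and a b :: real
  assumes P: "prob_space M" and a: "a > 0" and b: "b > 0"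
    and ind: "prob_space.indep_vars M (\<lambda>_. borel) S UNIV"
    and Da: "\<And>j. distributed M lborel (S (2 * j)) (exponential_density a)"
    and Db: "\<And>j. distributed M lborel (S (2 * j + 1)) (exponential_density b)"
    and n1: "(n+1) div 2 = Suc p" and n2: "n div 2 = Suc q" and t: "t \<ge> 0"
  shows "(\<lambda>l. Kc a b p q l * Jint b (p+q+1+l) t) sums Ftau M S n t"
proof -
  interpret prob_space M by (rule P)
  define A where "A = (\<lambda>j. 2*j) ` {..<Suc p}"
  define B where "B = (\<lambda>j. 2*j+1) ` {..<Suc q}"
  have split: "{..<n} = A \<union> B" unfolding A_def B_def n1[symmetric] n2[symmetric]
    by (rule lessThan_split_parity)
  have disj: "A \<inter> B = {}" unfolding A_def B_def by (rule parity_disjoint)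
  have finA: "finite A" and finB: "finite B" unfolding A_def B_def by auto
  have cardA: "card A = Suc p" unfolding A_def by (subst card_image) (auto simp: inj_on_def)
  have cardB: "card B = Suc q" unfolding B_def by (subst card_image) (auto simp: inj_on_def)
  define X where "X \<omega> = (\<Sum>i\<in>A. S i \<omega>)" for \<omega>
  define Y where "Y \<omega> = (\<Sum>i\<in>B. S i \<omega>)" for \<omega>
  have tauXY: "tau S n \<omega> = X \<omega> + Y \<omega>" for \<omega>
    unfolding tau_def X_def Y_def split using disj finA finB by (simp add: sum.union_disjoint)
  have DX: "distributed M lborel X (erlang_density p a)"
  proof -
    have "distributed M lborel (\<lambda>x. \<Sum>i\<in>A. S i x) (erlang_density (card A - 1) a)"
      by (rule exponential_distributed_sum[OF finA _ a])
         (auto simp: A_def Da intro: indep_vars_subset[OF ind])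
    then show ?thesis unfolding X_def cardA by simp
  qed
  have Db': "distributed M lborel (S (Suc (2 * j))) (exponential_density b)" for j
    using Db[of j] by simp
  have DY: "distributed M lborel Y (erlang_density q b)"
  proof -
    have "distributed M lborel (\<lambda>x. \<Sum>i\<in>B. S i x) (erlang_density (card B - 1) b)"
      by (rule exponential_distributed_sum[OF finB _ b])
         (auto simp: B_def Db' intro: indep_vars_subset[OF ind])
    then show ?thesis unfolding Y_def cardB by simp
  qed
  have IXY: "indep_var borel X borel Y"
    unfolding X_def Y_def using ind disj finA finB by (intro indep_var_sums) auto
  have "(\<lambda>l. Kc a b p q l * Jint b (p+q+1+l) t) sums measure M {\<omega>\<in>space M. X \<omega> + Y \<omega> \<le> t}"
    by (rule cdf_sum[OF P a b IXY DX DY t])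
  then show ?thesis unfolding Ftau_def tauXY .
qed



lemma count_iff:
  fixes T :: "nat \<Rightarrow> real"
  assumes T0: "T 0 = 0" and inc: "\<And>l. T l < T (Suc l)" and t: "0 \<le> t"
    and ne: "\<And>j. 1 \<le> j \<Longrightarrow> T j \<noteq> t" and fin: "\<exists>l. t \<le> T l"
  shows "card {l. 1 \<le> l \<and> T l < t} = k \<longleftrightarrow> (T k \<le> t \<and> \<not> T (Suc k) \<le> t)"
proof -
  have sm: "strict_mono T" using inc by (simp add: strict_mono_Suc_iff)
  then have mono: "i \<le> j \<Longrightarrow> T i \<le> T j" for i j by (simp add: strict_mono_less_eq)
  obtain l0 where l0: "t \<le> T l0" using fin by auto
  have ex: "t \<le> T (Suc l0)" using l0 mono[of l0 "Suc l0"] by simp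
  define m where "m = (LEAST l. t \<le> T (Suc l))"
  have m1: "t \<le> T (Suc m)" unfolding m_def by (rule LeastI[of _ l0]) (rule ex)
  have m2: "\<not> t \<le> T (Suc i)" if "i < m" for i using not_less_Least[OF that[unfolded m_def]] m_def by simp
  have L: "{l. 1 \<le> l \<and> T l < t} = {1..m}"
  proof (intro equalityI subsetI)
    fix l assume "l \<in> {l. 1 \<le> l \<and> T l < t}"
    then have l: "1 \<le> l" "T l < t" by auto
    have "l \<le> m"
    proof (rule ccontr)
      assume "\<not> l \<le> m"
      then have "T (Suc m) \<le> T l" by (intro mono) auto
      then show False using m1 l by simp
    qed
    then show "l \<in> {1..m}" using l by simp
  next
    fix l assume "l \<in> {1..m}"
    then have l: "1 \<le> l" "l \<le> m" by auto
    then have "\<not> t \<le> T (Suc (l - 1))" by (intro m2) auto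
    then show "l \<in> {l. 1 \<le> l \<and> T l < t}" using l by simp
  qed
  have "card {l. 1 \<le> l \<and> T l < t} = m" unfolding L by simp
  moreover have "m = k \<longleftrightarrow> (T k \<le> t \<and> \<not> T (Suc k) \<le> t)"
  proof
    assume "m = k"
    moreover have "T (Suc m) \<noteq> t" by (intro ne) auto
    moreover have "T m \<le> t"
    proof (cases m)
      case 0 then show ?thesis using T0 t by simp
    next
      case (Suc i) then show ?thesis using m2[of i] by simp
    qed
    ultimately show "T k \<le> t \<and> \<not> T (Suc k) \<le> t" using m1 by auto
  next
    assume k: "T k \<le> t \<and> \<not> T (Suc k) \<le> t"
    have "m \<le> k" unfolding m_def by (rule Least_le) (use k in auto)
    moreover have "\<not> m < k"
    proof
      assume "m < k"
      then have "T (Suc m) \<le> T k" by (intro mono) auto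
      then have "T (Suc m) = t" using m1 k by simp
      then show False using ne[of "Suc m"] by simp
    qed
    ultimately show "m = k" by simp
  qed
  ultimately show ?thesis by simp
qed

lemma (in prob_space) distributed_point_null:
  assumes D: "distributed M lborel Z f"
  shows "prob {\<omega>\<in>space M. Z \<omega> = c} = 0"
proof -
  have "emeasure M {\<omega>\<in>space M. Z \<omega> = c} = emeasure M (Z -` {c} \<inter> space M)"
    by (intro arg_cong[where f="emeasure M"]) auto
  also have "\<dots> = (\<integral>\<^sup>+x. f x * indicator {c} x \<partial>lborel)"
    by (rule distributed_emeasure[OF D]) auto
  also have "\<dots> = 0"
    by (intro nn_integral_zero') (use AE_lborel_singleton[of c] in \<open>auto elim!: AE_mp\<close>)
  finally show ?thesis by (simp add: emeasure_eq_measure)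
qed

lemma tau_density:
  fixes M :: "'a measure" and S :: "nat \<Rightarrow> 'a \<Rightarrow> real" and a b :: real
  assumes P: "prob_space M" and a: "a > 0" and b: "b > 0"
    and ind: "prob_space.indep_vars M (\<lambda>_. borel) S UNIV"
    and Da: "\<And>j. distributed M lborel (S (2 * j)) (exponential_density a)"
    and Db: "\<And>j. distributed M lborel (S (2 * j + 1)) (exponential_density b)"
    and n: "1 \<le> n"
  shows "\<exists>f. distributed M lborel (tau S n) f"
proof (cases "n = 1")
  case True
  have "tau S n = S 0" using True by (simp add: fun_eq_iff tau_def)
  then show ?thesis using Da[of 0] by auto
next
  case False
  interpret prob_space M by (rule P)
  define p where "p = (n+1) div 2 - 1"
  define q where "q = n div 2 - 1"
  have n1: "(n+1) div 2 = Suc p" and n2: "n div 2 = Suc q" using n False unfolding p_def q_def by auto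
  define A where "A = (\<lambda>j. 2*j) ` {..<Suc p}"
  define B where "B = (\<lambda>j. 2*j+1) ` {..<Suc q}"
  have split: "{..<n} = A \<union> B" unfolding A_def B_def n1[symmetric] n2[symmetric]
    by (rule lessThan_split_parity)
  have disj: "A \<inter> B = {}" unfolding A_def B_def by (rule parity_disjoint)
  have finA: "finite A" and finB: "finite B" unfolding A_def B_def by auto
  have cardA: "card A = Suc p" unfolding A_def by (subst card_image) (auto simp: inj_on_def)
  have cardB: "card B = Suc q" unfolding B_def by (subst card_image) (auto simp: inj_on_def)
  define X where "X \<omega> = (\<Sum>i\<in>A. S i \<omega>)" for \<omega>
  define Y where "Y \<omega> = (\<Sum>i\<in>B. S i \<omega>)" for \<omega>
  have tauXY: "tau S n = (\<lambda>\<omega>. X \<omega> + Y \<omega>)"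
    unfolding tau_def X_def Y_def split using disj finA finB by (simp add: sum.union_disjoint fun_eq_iff)
  have DX: "distributed M lborel X (erlang_density p a)"
  proof -
    have "distributed M lborel (\<lambda>x. \<Sum>i\<in>A. S i x) (erlang_density (card A - 1) a)"
      by (rule exponential_distributed_sum[OF finA _ a])
         (auto simp: A_def Da intro: indep_vars_subset[OF ind])
    then show ?thesis unfolding X_def cardA by simp
  qed
  have Db': "distributed M lborel (S (Suc (2 * j))) (exponential_density b)" for j
    using Db[of j] by simp
  have DY: "distributed M lborel Y (erlang_density q b)"
  proof -
    have "distributed M lborel (\<lambda>x. \<Sum>i\<in>B. S i x) (erlang_density (card B - 1) b)"
      by (rule exponential_distributed_sum[OF finB _ b])
         (auto simp: B_def Db' intro: indep_vars_subset[OF ind])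
    then show ?thesis unfolding Y_def cardB by simp
  qed
  have IXY: "indep_var borel X borel Y"
    unfolding X_def Y_def using ind disj finA finB by (intro indep_var_sums) auto
  show ?thesis unfolding tauXY using distributed_convolution[OF IXY DX DY] by blast
qed



lemma erlang_CDF_lim:
  assumes a: "a > 0" and t: "t \<ge> 0"
  shows "(\<lambda>n. erlang_CDF n a t) \<longlonglongrightarrow> 0"
proof -
  define x where "x = a * t"
  have "(\<lambda>n. \<Sum>m<n. x^m / fact m) \<longlonglongrightarrow> exp x"
    using exp_sums_real[of x] by (simp add: sums_def)
  then have "(\<lambda>n. \<Sum>m<Suc n. x^m / fact m) \<longlonglongrightarrow> exp x"
    by (rule LIMSEQ_Suc)
  then have "(\<lambda>n. \<Sum>m\<le>n. x^m / fact m) \<longlonglongrightarrow> exp x"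
    by (simp add: lessThan_Suc_atMost)
  then have "(\<lambda>n. 1 - exp (-x) * (\<Sum>m\<le>n. x^m / fact m)) \<longlonglongrightarrow> 1 - exp (-x) * exp x"
    by (intro tendsto_intros)
  moreover have "1 - exp (-x) * exp x = 0" by (simp add: exp_minus)
  moreover have "erlang_CDF n a t = 1 - exp (-x) * (\<Sum>m\<le>n. x^m / fact m)" for n
    unfolding erlang_CDF_def x_def using t
    by (simp add: sum_distrib_left mult_ac)
  ultimately show ?thesis by simp
qed

lemma part2:
  fixes M :: "'a measure" and S :: "nat \<Rightarrow> 'a \<Rightarrow> real" and a b :: real
  assumes P: "prob_space M" and a: "a > 0" and b: "b > 0"
    and ind: "prob_space.indep_vars M (\<lambda>_. borel) S UNIV"
    and Da: "\<And>j. distributed M lborel (S (2 * j)) (exponential_density a)"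
    and Db: "\<And>j. distributed M lborel (S (2 * j + 1)) (exponential_density b)"
    and t: "t \<ge> 0"
  shows "measure M {\<omega> \<in> space M. Ncount S t \<omega> = k} = Ftau M S k t - Ftau M S (k + 1) t"
proof -
  interpret prob_space M by (rule P)
  have Smeas[measurable]: "S i \<in> borel_measurable M" for i
    using ind unfolding indep_vars_def by auto
  have taum[measurable]: "tau S j \<in> borel_measurable M" for j
    unfolding tau_def[abs_def] by measurable
  have Db': "distributed M lborel (S (Suc (2 * j))) (exponential_density b)" for j
    using Db[of j] by simp
  have pos1: "AE \<omega> in M. 0 < S i \<omega>" for i
  proof -
    have "prob {\<omega>\<in>space M. S i \<omega> \<le> 0} = 0"
    proof (cases "even i")
      case True
      then obtain j where "i = 2 * j" by blast
      then show ?thesis using exponential_distributedD_le[OF Da[of j], of 0] a by simp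
    next
      case False
      then obtain j where "i = Suc (2 * j)" by (metis oddE Suc_eq_plus1)
      then show ?thesis using exponential_distributedD_le[OF Db'[of j], of 0] b by simp
    qed
    then have "AE \<omega> in M. \<not> S i \<omega> \<le> 0"
      by (subst (asm) prob_Collect_eq_0) auto
    then show ?thesis by (auto elim: AE_mp)
  qed
  have AE1: "AE \<omega> in M. \<forall>i. 0 < S i \<omega>"
    using pos1 by (simp add: AE_all_countable)
  have AE2: "AE \<omega> in M. \<forall>j. 1 \<le> j \<longrightarrow> tau S j \<omega> \<noteq> t"
  proof -
    have "AE \<omega> in M. 1 \<le> j \<longrightarrow> tau S j \<omega> \<noteq> t" for j
    proof (cases "1 \<le> j")
      case True
      obtain f where "distributed M lborel (tau S j) f"
        using tau_density[OF P a b ind Da Db True] by blast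
      then have "prob {\<omega>\<in>space M. tau S j \<omega> = t} = 0" by (rule distributed_point_null)
      then have "AE \<omega> in M. \<not> tau S j \<omega> = t"
        by (subst (asm) prob_Collect_eq_0) auto
      then show ?thesis by (auto elim: AE_mp)
    qed simp
    then show ?thesis by (simp add: AE_all_countable)
  qed
  have AE3: "AE \<omega> in M. \<exists>l. t \<le> tau S l \<omega>"
  proof -
    define Inf where "Inf = {\<omega>\<in>space M. \<forall>l. tau S l \<omega> < t}"
    have Infm: "Inf \<in> sets M" unfolding Inf_def by measurable
    have bound: "prob Inf \<le> erlang_CDF n a t" for n
    proof -
      define A where "A = (\<lambda>j. 2*j) ` {..<Suc n}"
      have finA: "finite A" unfolding A_def by auto
      have cardA: "card A = Suc n" unfolding A_def by (subst card_image) (auto simp: inj_on_def)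
      have DX: "distributed M lborel (\<lambda>x. \<Sum>i\<in>A. S i x) (erlang_density (card A - 1) a)"
        by (rule exponential_distributed_sum[OF finA _ a])
           (auto simp: A_def Da intro: indep_vars_subset[OF ind])
      have sub: "A \<subseteq> {..<2 * Suc n}" unfolding A_def by auto
      have "AE \<omega> in M. \<omega> \<in> Inf \<longrightarrow> \<omega> \<in> {\<omega>\<in>space M. (\<Sum>i\<in>A. S i \<omega>) \<le> t}"
        using AE1
      proof (rule AE_mp, intro AE_I2 impI)
        fix \<omega> assume \<omega>: "\<omega> \<in> space M" and posw: "\<forall>i. 0 < S i \<omega>" and inf: "\<omega> \<in> Inf"
        have "(\<Sum>i\<in>A. S i \<omega>) \<le> (\<Sum>i\<in>{..<2 * Suc n}. S i \<omega>)"
          using sub posw by (intro sum_mono2) (auto intro: less_imp_le)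
        also have "\<dots> = tau S (2 * Suc n) \<omega>" unfolding tau_def ..
        also have "\<dots> \<le> t" using inf unfolding Inf_def by (auto intro: less_imp_le)
        finally show "\<omega> \<in> {\<omega>\<in>space M. (\<Sum>i\<in>A. S i \<omega>) \<le> t}" using \<omega> by simp
      qed
      then have "prob Inf \<le> prob {\<omega>\<in>space M. (\<Sum>i\<in>A. S i \<omega>) \<le> t}"
        by (rule finite_measure_mono_AE) measurable
      also have "\<dots> = erlang_CDF n a t"
        using erlang_distributed_le[OF DX a t] cardA by simp
      finally show ?thesis .
    qed
    have "prob Inf \<le> 0"
      by (rule LIMSEQ_le_const[OF erlang_CDF_lim[OF a t]]) (use bound in auto)
    then have "prob Inf = 0" using measure_nonneg[of M Inf] by simp
    then have "AE \<omega> in M. \<omega> \<notin> Inf" using prob_eq_0[OF Infm] by simp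
    then show ?thesis unfolding Inf_def by (auto elim!: AE_mp intro!: AE_I2 simp: not_less)
  qed
  define E1 where "E1 = {\<omega>\<in>space M. tau S k \<omega> \<le> t}"
  define E2 where "E2 = {\<omega>\<in>space M. tau S (Suc k) \<omega> \<le> t}"
  have E1m: "E1 \<in> sets M" and E2m: "E2 \<in> sets M" unfolding E1_def E2_def by measurable
  \<comment> \<open>measurability of the counting event\<close>
  have Ncount_iff: "Ncount S t \<omega> = k \<longleftrightarrow>
     (\<exists>xs::nat list. card (set xs) = k \<and> (\<forall>l. (1 \<le> l \<and> tau S l \<omega> < t) \<longleftrightarrow> l \<in> set xs)) \<or>
     (k = 0 \<and> (\<forall>n. \<exists>l. n \<le> l \<and> 1 \<le> l \<and> tau S l \<omega> < t))" for \<omega>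
  proof -
    define L where "L = {l. 1 \<le> l \<and> tau S l \<omega> < t}"
    have N: "Ncount S t \<omega> = card L" unfolding Ncount_def L_def ..
    have eqL: "(\<forall>l. (1 \<le> l \<and> tau S l \<omega> < t) \<longleftrightarrow> l \<in> set xs) \<longleftrightarrow> L = set xs" for xs
      unfolding L_def by auto
    have unb: "(\<forall>n. \<exists>l. n \<le> l \<and> 1 \<le> l \<and> tau S l \<omega> < t) \<longleftrightarrow> infinite L"
      unfolding L_def infinite_nat_iff_unbounded_le by auto
    show ?thesis
    proof (cases "finite L")
      case True
      then obtain ys where ys: "set ys = L" using finite_list by blast
      show ?thesis unfolding N eqL unb using True ys by auto
    next
      case False
      then have "L \<noteq> set xs" for xs by auto
      then show ?thesis unfolding N eqL unb using False by auto
    qed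
  qed
  have Nm: "{\<omega>\<in>space M. Ncount S t \<omega> = k} \<in> sets M"
    unfolding Ncount_iff by measurable
  have AEeq: "AE \<omega> in M. \<omega> \<in> {\<omega>\<in>space M. Ncount S t \<omega> = k} \<longleftrightarrow> \<omega> \<in> E1 - E2"
    using AE1 AE2 AE3
  proof (eventually_elim)
    case (elim \<omega>)
    have "Ncount S t \<omega> = k \<longleftrightarrow> (tau S k \<omega> \<le> t \<and> \<not> tau S (Suc k) \<omega> \<le> t)"
      unfolding Ncount_def
    proof (rule count_iff[OF _ _ t])
      show "tau S 0 \<omega> = 0" by (simp add: tau_def)
      show "tau S l \<omega> < tau S (Suc l) \<omega>" for l using elim(1) by (simp add: tau_def)
      show "1 \<le> j \<Longrightarrow> tau S j \<omega> \<noteq> t" for j using elim(2) by auto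
      show "\<exists>l. t \<le> tau S l \<omega>" using elim(3) .
    qed
    then show ?case unfolding E1_def E2_def by auto
  qed
  have AEeq2: "AE \<omega> in M. \<omega> \<in> E1 \<inter> E2 \<longleftrightarrow> \<omega> \<in> E2"
    using AE1
  proof (eventually_elim)
    case (elim \<omega>)
    have "tau S k \<omega> \<le> tau S (Suc k) \<omega>" using elim by (simp add: tau_def less_imp_le)
    then show ?case unfolding E1_def E2_def by auto
  qed
  have "measure M {\<omega>\<in>space M. Ncount S t \<omega> = k} = measure M (E1 - E2)"
    using AEeq Nm E1m E2m by (intro measure_eq_AE) auto
  also have "E1 - E2 = E1 - (E1 \<inter> E2)" by auto
  also have "measure M (E1 - (E1 \<inter> E2)) = measure M E1 - measure M (E1 \<inter> E2)"
    using E1m E2m by (intro measure_Diff) auto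
  also have "measure M (E1 \<inter> E2) = measure M E2"
    using AEeq2 E1m E2m by (intro measure_eq_AE) auto
  finally show ?thesis unfolding E1_def E2_def Ftau_def by simp
qed


theorem lemma3:
  fixes M :: "'a measure" and S :: "nat \<Rightarrow> 'a \<Rightarrow> real" and lam12 lam21 :: real
  assumes "prob_space M"
    and "lam12 > 0" and "lam21 > 0"
    and "prob_space.indep_vars M (\<lambda>_. borel) S UNIV"
    and "\<And>j. distributed M lborel (S (2 * j)) (exponential_density lam12)"
    and "\<And>j. distributed M lborel (S (2 * j + 1)) (exponential_density lam21)"
  shows "(\<forall>k::nat. \<forall>t::real. k \<ge> 1 \<and> t \<ge> 0 \<longrightarrow>
            (\<lambda>l. Dcoef lam12 lam21 k k (2 * k) * Ccoef lam12 lam21 k (2 * k) l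
                  * lower_gamma (real (2 * k + l)) (lam21 * t)) sums Ftau M S (2 * k) t
          \<and> (\<lambda>l. Dcoef lam12 lam21 (k + 1) (k + 1) (2 * k + 1) * Ccoef lam12 lam21 (k + 1) (2 * k + 1) l
                  * lower_gamma (real (2 * k + l + 1)) (lam21 * t)) sums Ftau M S (2 * k + 1) t)
       \<and> (\<forall>k::nat. \<forall>t::real. t \<ge> 0 \<longrightarrow>
            measure M {\<omega> \<in> space M. Ncount S t \<omega> = k} = Ftau M S k t - Ftau M S (k + 1) t)"
proof (intro conjI allI impI)
  fix k :: nat and t :: real
  assume kt: "k \<ge> 1 \<and> t \<ge> 0"
  then obtain p where k: "k = Suc p" by (metis Suc_le_D One_nat_def)
  have t: "t \<ge> 0" using kt by simp
  have "(\<lambda>l. Kc lam12 lam21 p p l * Jint lam21 (p+p+1+l) t) sums Ftau M S (2 * k) t"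
    by (rule tau_cdf[OF assms]) (use k t in auto)
  moreover have "Kc lam12 lam21 p p l * Jint lam21 (p+p+1+l) t =
      Dcoef lam12 lam21 k k (2 * k) * Ccoef lam12 lam21 k (2 * k) l * lower_gamma (real (2 * k + l)) (lam21 * t)" for l
  proof -
    have e1: "Suc (Suc (p+p)) = 2*k" and e2: "Suc p = k" using k by simp_all
    show ?thesis using coef_eq[OF assms(2,3) t, of p p l] by (simp only: e1 e2)
  qed
  ultimately show "(\<lambda>l. Dcoef lam12 lam21 k k (2 * k) * Ccoef lam12 lam21 k (2 * k) l
                  * lower_gamma (real (2 * k + l)) (lam21 * t)) sums Ftau M S (2 * k) t" by simp
  have "(\<lambda>l. Kc lam12 lam21 k p l * Jint lam21 (k+p+1+l) t) sums Ftau M S (2 * k + 1) t"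
    by (rule tau_cdf[OF assms]) (use k t in auto)
  moreover have "Kc lam12 lam21 k p l * Jint lam21 (k+p+1+l) t =
      Dcoef lam12 lam21 (k + 1) (k + 1) (2 * k + 1) * Ccoef lam12 lam21 (k + 1) (2 * k + 1) l
                  * lower_gamma (real (2 * k + l + 1)) (lam21 * t)" for l
  proof -
    have e3: "Suc k = k + 1" and e4: "Suc (Suc (k+p)) = 2*k+1" and e5: "2*k+1+l = 2*k+l+1" using k by simp_all
    show ?thesis using coef_eq[OF assms(2,3) t, of k p l] by (simp only: e3 e4 e5)
  qed
  ultimately show "(\<lambda>l. Dcoef lam12 lam21 (k + 1) (k + 1) (2 * k + 1) * Ccoef lam12 lam21 (k + 1) (2 * k + 1) l
                  * lower_gamma (real (2 * k + l + 1)) (lam21 * t)) sums Ftau M S (2 * k + 1) t" by simp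
next
  fix k :: nat and t :: real
  assume "t \<ge> 0"
  then show "measure M {\<omega> \<in> space M. Ncount S t \<omega> = k} = Ftau M S k t - Ftau M S (k + 1) t"
    by (rule part2[OF assms])
qed

end
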